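(* Let $K\subset\mathbb{R}^n$ be a $0$-symmetric convex body, and let $a_1,\dots,a_n\in\mathbb{Z}^n$ be linearly independent with $a_j\in\lambda_j(K)K$ for $1\le j\le n$. Let $i\in\{1,\dots,n-1\}$, let $\overline{L}$ be an $i$-dimensional linear subspace of $\mathbb{R}^n$ containing $i$ linearly independent points of $\mathbb{Z}^n$, and let $j_1,\dots,j_{n-i}$ be distinct indices in $\{1,\dots,n\}$ with $\mathrm{lin}\{a_{j_1},\dots,a_{j_{n-i}}\}\cap\overline{L}=\{0\}$. Then $$\prod_{j=1}^i\lambda_j(K\cap\overline{L},\mathbb{Z}^n\cap\overline{L})\geq\prod_{k\in\{1,\dots,n\}\setminus\{j_1,\dots,j_{n-i}\}}\lambda_k(K).$$
   Context: A $0$-symmetric convex body is a compact convex set $K=-K$ with nonempty interior. $\lambda_j(K)=\min\{\lambda>0:\dim(\lambda K\cap\mathbb{Z}^n)\ge j\}$ ($\dim$ = dimension of affine hull). Analogously, for the $i$-dimensional body $K\cap\overline{L}$ in the space $\overline{L}$ with lattice $\mathbb{Z}^n\cap\overline{L}$, $\lambda_j(K\cap\overline{L},\mathbb{Z}^n\cap\overline{L})=\min\{\lambda>0:\dim(\lambda (K\cap\overline{L})\cap\mathbb{Z}^n)\ge j\}$, $1\le j\le i$. *)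

theory Defs
  imports "HOL-Analysis.Analysis"
begin

definition int_lattice :: "(real ^ 'n) set" where
  "int_lattice = {x. \<forall>k. x $ k \<in> \<int>}"

definition sym_convex_body :: "(real ^ 'n) set \<Rightarrow> bool" where
  "sym_convex_body K \<longleftrightarrow> compact K \<and> convex K \<and> uminus ` K = K \<and> interior K \<noteq> {}"

text \<open>The minimum is written as an infimum (it is attained for the cases considered).\<close>
definition succ_min :: "(real ^ 'n) set \<Rightarrow> (real ^ 'n) set \<Rightarrow> nat \<Rightarrow> real" where
  "succ_min C Lam j = Inf {lam. lam > 0 \<and> aff_dim (((\<lambda>x. lam *\<^sub>R x) ` C) \<inter> Lam) \<ge> int j}"

end

theory Submission
  imports Defs
begin

lemma aff_dim_zero:
  fixes X :: "(real ^ 'n) set"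
  assumes "0 \<in> X" shows "aff_dim X = int (dim X)"
proof -
  have "0 \<in> affine hull X" using assms by (simp add: hull_inc)
  from aff_dim_eq_dim[OF this] show ?thesis by simp
qed

lemma scale_mono:
  fixes K :: "(real ^ 'n) set"
  assumes "convex K" "0 \<in> K" "0 \<le> t" "t \<le> s" "0 < s"
  shows "(\<lambda>x. t *\<^sub>R x) ` K \<subseteq> (\<lambda>x. s *\<^sub>R x) ` K"
proof
  fix z assume "z \<in> (\<lambda>x. t *\<^sub>R x) ` K"
  then obtain y where y: "y \<in> K" "z = t *\<^sub>R y" by auto
  have "(1 - t/s) *\<^sub>R 0 + (t/s) *\<^sub>R y \<in> K"
    using convexD[OF assms(1) assms(2) y(1), of "1 - t/s" "t/s"] assms by auto
  hence "(t/s) *\<^sub>R y \<in> K" by simp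
  moreover have "z = s *\<^sub>R ((t/s) *\<^sub>R y)" using y assms by simp
  ultimately show "z \<in> (\<lambda>x. s *\<^sub>R x) ` K" by blast
qed

lemma zero_interior:
  fixes K :: "(real ^ 'n) set"
  assumes "sym_convex_body K" shows "\<exists>r>0. cball 0 r \<subseteq> K"
proof -
  from assms obtain x where x: "x \<in> interior K" and c: "convex K" and s: "uminus ` K = K"
    unfolding sym_convex_body_def by auto
  have "-x \<in> interior K" using x interior_negations[of K] s by auto
  have "(1/2) *\<^sub>R x + (1/2) *\<^sub>R (-x) \<in> interior K"
    using convexD[OF convex_interior[OF c] x \<open>-x \<in> interior K\<close>, of "1/2" "1/2"] by simp
  hence "0 \<in> interior K" by simp
  thus ?thesis using mem_interior_cball by blast
qed

lemma absorb:
  fixes K L :: "(real ^ 'n) set"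
  assumes "0 < r" "cball 0 r \<subseteq> K" "finite S" "S \<subseteq> L" "subspace L"
  shows "\<exists>t>0. S \<subseteq> (\<lambda>x. t *\<^sub>R x) ` (K \<inter> L)"
proof -
  define t where "t = (sum norm S + 1) / r"
  have tp: "t > 0" unfolding t_def using assms(1) sum_nonneg[of S norm] by auto
  have "S \<subseteq> (\<lambda>x. t *\<^sub>R x) ` (K \<inter> L)"
  proof
    fix s assume s: "s \<in> S"
    have ns: "norm s \<le> sum norm S" using member_le_sum[of s S norm] s assms(3) by auto
    have "norm ((1/t) *\<^sub>R s) = norm s / t" using tp by simp
    also have "\<dots> \<le> r"
    proof -
      have h: "r * norm s \<le> r * sum norm S" using mult_left_mono[OF ns] assms(1) by simp
      show ?thesis using tp assms(1) unfolding t_def apply (simp add: field_simps) using h by linarith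
    qed
    finally have "(1/t) *\<^sub>R s \<in> K" using assms(2) by auto
    moreover have "(1/t) *\<^sub>R s \<in> L" using s assms(4,5) by (auto intro: subspace_scale)
    moreover have "s = t *\<^sub>R ((1/t) *\<^sub>R s)" using tp by simp
    ultimately show "s \<in> (\<lambda>x. t *\<^sub>R x) ` (K \<inter> L)" by blast
  qed
  thus ?thesis using tp by blast
qed

lemma zero_lattice: "(0::real^'n) \<in> int_lattice"
  by (simp add: int_lattice_def)

lemma nonempty_set:
  fixes K L :: "(real ^ 'n) set"
  assumes K: "sym_convex_body K" and L: "subspace L"
    and S: "S \<subseteq> int_lattice \<inter> L" "independent S" "j \<le> card S"
  shows "\<exists>t>0. aff_dim (((\<lambda>x. t *\<^sub>R x) ` (K \<inter> L)) \<inter> (int_lattice \<inter> L)) \<ge> int j"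
proof -
  obtain r where r: "r > 0" "cball 0 r \<subseteq> K" using zero_interior[OF K] by blast
  have fin: "finite S" using independent_bound S(2) by blast
  obtain t where t: "t > 0" "S \<subseteq> (\<lambda>x. t *\<^sub>R x) ` (K \<inter> L)"
    using absorb[OF r fin _ L] S(1) by blast
  define X where "X = ((\<lambda>x. t *\<^sub>R x) ` (K \<inter> L)) \<inter> (int_lattice \<inter> L)"
  have "0 \<in> K" using r by auto
  hence "0 \<in> X" unfolding X_def using zero_lattice subspace_0[OF L]
    by (auto intro!: image_eqI[of 0 _ 0])
  have "S \<subseteq> X" unfolding X_def using t S(1) by auto
  hence "dim S \<le> dim X" by (rule dim_subset)
  hence "card S \<le> dim X" using dim_eq_card_independent[OF S(2)] by simp
  thus ?thesis using aff_dim_zero[OF \<open>0 \<in> X\<close>] t(1) S(3) unfolding X_def by auto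
qed

lemma sm_ge0:
  assumes "\<exists>t>0. aff_dim (((\<lambda>x. t *\<^sub>R x) ` C) \<inter> Lam) \<ge> int j"
  shows "0 \<le> succ_min C Lam j"
  unfolding succ_min_def using assms by (intro cInf_greatest) auto

lemma sm_le:
  assumes "t > 0" "aff_dim (((\<lambda>x. t *\<^sub>R x) ` C) \<inter> Lam) \<ge> int j"
  shows "succ_min C Lam j \<le> t"
  unfolding succ_min_def using assms
  by (intro cInf_lower) (auto simp: bdd_below_def intro!: exI[of _ 0])

lemma sm_mono:
  assumes "\<exists>t>0. aff_dim (((\<lambda>x. t *\<^sub>R x) ` C) \<inter> Lam) \<ge> int j'" "j \<le> j'"
  shows "succ_min C Lam j \<le> succ_min C Lam j'"
  unfolding succ_min_def using assms
  by (intro cInf_superset_mono) (auto simp: bdd_below_def intro!: exI[of _ 0])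

theorem lemma2p3:
  fixes K L :: "(real ^ 'n) set" and a :: "nat \<Rightarrow> real ^ 'n"
    and i :: nat and J :: "nat set"
  assumes K: "sym_convex_body K"
    and a_int: "\<forall>j\<in>{1..CARD('n)}. a j \<in> int_lattice"
    and a_inj: "inj_on a {1..CARD('n)}"
    and a_indep: "independent (a ` {1..CARD('n)})"
    and a_min: "\<forall>j\<in>{1..CARD('n)}. a j \<in> (\<lambda>x. succ_min K int_lattice j *\<^sub>R x) ` K"
    and i: "1 \<le> i" "i \<le> CARD('n) - 1"
    and L: "subspace L" "dim L = i"
    and L_lat: "\<exists>S. S \<subseteq> int_lattice \<inter> L \<and> independent S \<and> card S = i"
    and J: "J \<subseteq> {1..CARD('n)}" "card J = CARD('n) - i"
    and J_L: "span (a ` J) \<inter> L = {0}"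
  shows "(\<Prod>j=1..i. succ_min (K \<inter> L) (int_lattice \<inter> L) j)
           \<ge> (\<Prod>k\<in>{1..CARD('n)} - J. succ_min K int_lattice k)"
proof -
  define n where "n = CARD('n)"
  define lam where "lam k = succ_min K int_lattice k" for k
  define mu where "mu k = succ_min (K \<inter> L) (int_lattice \<inter> L) k" for k
  have cK: "convex K" and sK: "uminus ` K = K" using K unfolding sym_convex_body_def by auto
  obtain r where r: "r > 0" "cball 0 r \<subseteq> K" using zero_interior[OF K] by blast
  have K0: "0 \<in> K" using r by auto
  have cardA: "card (a ` {1..n}) = n" using a_inj card_image n_def by fastforce
  have ne_full: "\<exists>t>0. aff_dim (((\<lambda>x. t *\<^sub>R x) ` K) \<inter> int_lattice) \<ge> int j" if "j \<le> n" for j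
    using nonempty_set[OF K subspace_UNIV, of "a ` {1..n}" j] a_int a_indep cardA that
    unfolding n_def by auto
  have lam_ge0: "0 \<le> lam j" if "j \<le> n" for j
    unfolding lam_def using sm_ge0[OF ne_full[OF that]] .
  have lam_mono: "lam j \<le> lam j'" if "j \<le> j'" "j' \<le> n" for j j'
    unfolding lam_def using sm_mono[OF ne_full[OF that(2)] that(1)] .
  have a_in: "a j \<in> (\<lambda>x. \<mu> *\<^sub>R x) ` K" if "j \<in> {1..n}" "0 < \<mu>" "lam j \<le> \<mu>" for j \<mu>
  proof -
    have "a j \<in> (\<lambda>x. lam j *\<^sub>R x) ` K" using a_min that(1) unfolding lam_def n_def by auto
    moreover have "(\<lambda>x. lam j *\<^sub>R x) ` K \<subseteq> (\<lambda>x. \<mu> *\<^sub>R x) ` K"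
      using scale_mono[OF cK K0 lam_ge0 that(3) that(2)] that(1) by auto
    ultimately show ?thesis by blast
  qed
  have cover: "x \<in> span (a ` {j\<in>{1..n}. lam j \<le> \<mu>})"
    if mu0: "0 < \<mu>" and x: "x \<in> ((\<lambda>x. \<mu> *\<^sub>R x) ` K) \<inter> int_lattice" for x \<mu>
  proof (rule ccontr)
    define P where "P = {j\<in>{1..n}. lam j \<le> \<mu>}"
    assume nx: "x \<notin> span (a ` {j\<in>{1..n}. lam j \<le> \<mu>})"
    hence nx': "x \<notin> span (a ` P)" unfolding P_def .
    define B where "B = insert x (a ` P)"
    have indP: "independent (a ` P)"
      by (rule independent_mono[OF a_indep]) (auto simp: P_def n_def)
    have indB: "independent B" unfolding B_def using independent_insertI[OF nx' indP] .
    have xnot: "x \<notin> a ` P" using nx' span_base by blast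
    have finP: "finite P" unfolding P_def by auto
    have cP: "card (a ` P) = card P"
      by (rule card_image[OF inj_on_subset[OF a_inj]]) (auto simp: P_def n_def)
    have cB: "card B = card P + 1" unfolding B_def using xnot cP finP by simp
    have cBn: "card B \<le> n" using independent_bound[OF indB] unfolding n_def by simp
    define Y where "Y = ((\<lambda>x. \<mu> *\<^sub>R x) ` K) \<inter> int_lattice"
    have "0 \<in> Y" unfolding Y_def using K0 zero_lattice by (auto intro!: image_eqI[of 0 _ 0])
    have "B \<subseteq> Y" unfolding B_def Y_def using x a_in mu0 a_int unfolding P_def n_def by auto
    hence "card B \<le> dim Y" using dim_subset dim_eq_card_independent[OF indB] by metis
    hence "aff_dim Y \<ge> int (card P + 1)" using aff_dim_zero[OF \<open>0 \<in> Y\<close>] cB by simp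
    hence le: "lam (card P + 1) \<le> \<mu>" unfolding lam_def Y_def using sm_le[OF mu0] by blast
    have "{1..card P + 1} \<subseteq> P"
    proof
      fix j assume j: "j \<in> {1..card P + 1}"
      have "lam j \<le> lam (card P + 1)" using lam_mono j cB cBn by auto
      thus "j \<in> P" using le j cB cBn unfolding P_def by auto
    qed
    from card_mono[OF finP this] show False by simp
  qed
  define N where "N = {1..n} - J"
  have finN: "finite N" unfolding N_def by auto
  have cN: "card N = i" unfolding N_def using card_Diff_subset[of J "{1..n}"] J i
    unfolding n_def by (auto dest: finite_subset)
  define rk where "rk k = card {j\<in>N. j \<le> k}" for k
  obtain S where S: "S \<subseteq> int_lattice \<inter> L" "independent S" "card S = i" using L_lat by blast
  have key: "lam k \<le> mu (rk k)" if k: "k \<in> N" for k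
  proof -
    define l where "l = rk k"
    have l1: "1 \<le> l" unfolding l_def rk_def using k finN
      by (auto simp: Suc_le_eq card_gt_0_iff)
    have li: "l \<le> i" unfolding l_def rk_def using card_mono[OF finN, of "{j\<in>N. j \<le> k}"] cN by auto
    have ne: "\<exists>t>0. aff_dim (((\<lambda>x. t *\<^sub>R x) ` (K \<inter> L)) \<inter> (int_lattice \<inter> L)) \<ge> int l"
      using nonempty_set[OF K L(1) S(1,2)] S(3) li by auto
    have kn: "1 \<le> k" "k \<le> n" using k unfolding N_def by auto
    show ?thesis unfolding mu_def succ_min_def l_def[symmetric]
    proof (rule cInf_greatest)
      show "{lam. 0 < lam \<and> int l \<le> aff_dim ((\<lambda>x. lam *\<^sub>R x) ` (K \<inter> L) \<inter> (int_lattice \<inter> L))} \<noteq> {}"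
        using ne by auto
      fix \<mu> assume "\<mu> \<in> {lam. 0 < lam \<and> int l \<le> aff_dim ((\<lambda>x. lam *\<^sub>R x) ` (K \<inter> L) \<inter> (int_lattice \<inter> L))}"
      hence mu0: "0 < \<mu>" and dX: "int l \<le> aff_dim ((\<lambda>x. \<mu> *\<^sub>R x) ` (K \<inter> L) \<inter> (int_lattice \<inter> L))"
        by auto
      show "lam k \<le> \<mu>"
      proof (rule ccontr)
        assume "\<not> lam k \<le> \<mu>"
        hence lt: "\<mu> < lam k" by simp
        define X where "X = (\<lambda>x. \<mu> *\<^sub>R x) ` (K \<inter> L) \<inter> (int_lattice \<inter> L)"
        define V where "V = span (a ` {1..<k})"
        have "0 \<in> X" unfolding X_def using K0 zero_lattice subspace_0[OF L(1)]
          by (auto intro!: image_eqI[of 0 _ 0])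
        have dimX: "l \<le> dim X" using dX aff_dim_zero[OF \<open>0 \<in> X\<close>] unfolding X_def by simp
        have Psub: "{j\<in>{1..n}. lam j \<le> \<mu>} \<subseteq> {1..<k}"
        proof
          fix j assume j: "j \<in> {j\<in>{1..n}. lam j \<le> \<mu>}"
          have "\<not> k \<le> j" using lam_mono[of k j] j lt by auto
          thus "j \<in> {1..<k}" using j by auto
        qed
        have XVL: "X \<subseteq> V \<inter> L"
        proof
          fix x assume x: "x \<in> X"
          hence "x \<in> ((\<lambda>x. \<mu> *\<^sub>R x) ` K) \<inter> int_lattice" unfolding X_def by auto
          hence "x \<in> span (a ` {j\<in>{1..n}. lam j \<le> \<mu>})" using cover mu0 by blast
          hence "x \<in> V" unfolding V_def using span_mono[OF image_mono[OF Psub]] by blast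
          thus "x \<in> V \<inter> L" using x unfolding X_def by auto
        qed
        define JK where "JK = J \<inter> {1..<k}"
        define NK where "NK = N \<inter> {1..<k}"
        have split: "{1..<k} = JK \<union> NK" "JK \<inter> NK = {}"
          unfolding JK_def NK_def N_def using kn by auto
        have "{j\<in>N. j \<le> k} = insert k NK" unfolding NK_def using k unfolding N_def by auto
        hence cNK: "card NK = l - 1" unfolding l_def rk_def NK_def by simp
        have cJK: "card JK = (k - 1) - (l - 1)"
        proof -
          have "card {1..<k} = card JK + card NK"
            using card_Un_disjoint[of JK NK] split by (simp add: NK_def JK_def)
          thus ?thesis using cNK by simp
        qed
        have lk: "l - 1 \<le> k - 1" using card_mono[of "{1..<k}" NK] split by (simp add: cNK)
        have sub1: "{1..<k} \<subseteq> {1..CARD('n)}" using kn unfolding n_def by auto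
        have indk: "independent (a ` {1..<k})" by (rule independent_mono[OF a_indep]) (use sub1 in auto)
        have dV: "dim V = k - 1" unfolding V_def using dim_eq_card_independent[OF indk]
          card_image[OF inj_on_subset[OF a_inj sub1]] by simp
        have subJK: "JK \<subseteq> {1..CARD('n)}" using sub1 split by auto
        have indJK: "independent (a ` JK)" by (rule independent_mono[OF a_indep]) (use subJK in auto)
        have dA: "dim (span (a ` JK)) = k - 1 - (l - 1)" using dim_eq_card_independent[OF indJK]
          card_image[OF inj_on_subset[OF a_inj subJK]] cJK by simp
        have subV: "subspace (V \<inter> L)" unfolding V_def using L(1) subspace_span subspace_inter by blast
        have int0: "dim ((V \<inter> L) \<inter> span (a ` JK)) = 0"
        proof -
          have "span (a ` JK) \<subseteq> span (a ` J)" unfolding JK_def by (intro span_mono image_mono) auto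
          hence "(V \<inter> L) \<inter> span (a ` JK) \<subseteq> {0}" using J_L by auto
          from dim_subset[OF this] show ?thesis by simp
        qed
        have sumV: "{x + y |x y. x \<in> V \<inter> L \<and> y \<in> span (a ` JK)} \<subseteq> V"
        proof -
          have "span (a ` JK) \<subseteq> V" unfolding V_def using split by (intro span_mono) auto
          thus ?thesis unfolding V_def using span_add by blast
        qed
        have "dim {x + y |x y. x \<in> V \<inter> L \<and> y \<in> span (a ` JK)} \<le> k - 1"
          using dim_subset[OF sumV] dV by simp
        hence "dim (V \<inter> L) + (k - 1 - (l - 1)) \<le> k - 1"
          using dim_sums_Int[OF subV subspace_span, of "a ` JK"] int0 dA by simp
        hence "dim (V \<inter> L) \<le> l - 1" using lk by simp
        moreover have "dim X \<le> dim (V \<inter> L)" using dim_subset[OF XVL] .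
        ultimately show False using dimX l1 by simp
      qed
    qed
  qed
  have inj: "inj_on rk N"
  proof (rule linorder_inj_onI')
    fix k k' assume kk: "k \<in> N" "k' \<in> N" "k < k'"
    have ps: "{j\<in>N. j \<le> k} \<subset> {j\<in>N. j \<le> k'}"
    proof (rule psubsetI)
      show "{j\<in>N. j \<le> k} \<subseteq> {j\<in>N. j \<le> k'}" using kk by auto
      show "{j\<in>N. j \<le> k} \<noteq> {j\<in>N. j \<le> k'}"
      proof
        assume eq: "{j\<in>N. j \<le> k} = {j\<in>N. j \<le> k'}"
        have "k' \<in> {j\<in>N. j \<le> k'}" using kk by simp
        hence "k' \<le> k" using eq by blast
        thus False using kk by simp
      qed
    qed
    have "card {j\<in>N. j \<le> k} < card {j\<in>N. j \<le> k'}"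
      by (rule psubset_card_mono[OF _ ps]) (use finN in auto)
    thus "rk k \<noteq> rk k'" unfolding rk_def by simp
  qed
  have img: "rk ` N = {1..i}"
  proof (rule card_subset_eq)
    show "finite {1..i}" by simp
    show "rk ` N \<subseteq> {1..i}"
    proof
      fix m assume "m \<in> rk ` N"
      then obtain k where k: "k \<in> N" "m = rk k" by auto
      have "1 \<le> rk k" unfolding rk_def using k finN
        by (auto simp: Suc_le_eq card_gt_0_iff)
      moreover have "rk k \<le> i" unfolding rk_def using card_mono[OF finN, of "{j\<in>N. j \<le> k}"] cN by auto
      ultimately show "m \<in> {1..i}" using k by auto
    qed
    show "card (rk ` N) = card {1..i}" using card_image[OF inj] cN by simp
  qed
  have "(\<Prod>j=1..i. mu j) = (\<Prod>k\<in>N. mu (rk k))"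
    using prod.reindex[OF inj, of mu] img by simp
  also have "\<dots> \<ge> (\<Prod>k\<in>N. lam k)"
    by (rule prod_mono) (use key lam_ge0 in \<open>auto simp: N_def\<close>)
  finally show ?thesis unfolding mu_def lam_def N_def n_def by simp
qed

end
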